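(* For every constant $\delta>0$ there exist constants $c_\delta>0$ and $n_0$ such that for all $n\ge n_0$, all integers $k$ with $c_\delta\log n\le k\le n$, all integers $d\ge0$ and $t\ge1$ with $(d+1)\mid t$, every binary $t\times n$ matrix $M$ that is $d$-runlength constrained and is a (zero-error) QNAGT scheme for $k$ defectives satisfies $$t\ge\frac{2(1-\delta)\,k\log(1+n/k)}{\log\left(\frac{2\pi e k}{d+1}+2\right)}.$$
   Context: $\log$ denotes the base-2 logarithm. A binary $t\times n$ matrix $M$ is $d$-runlength constrained if in every column, any two $1$'s are separated by a run of at least $d$ zeros, i.e. $M_{ij}=M_{i'j}=1$ with $i<i'$ implies $i'-i\ge d+1$. A vector is $k$-sparse if its Hamming weight is at most $k$. $M$ is a zero-error QNAGT scheme for $k$ defectives if $Mx\ne Mx'$ (real matrix-vector product) for all distinct $k$-sparse $x,x'\in\{0,1\}^n$. *)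

theory Defs
  imports Complex_Main
begin

text \<open>A binary t x n matrix is represented as M :: nat => nat => nat with
  rows i < t and columns j < n; binary means every entry (in range) is 0 or 1.
  Binary vectors of length n are functions x :: nat => nat with x j in {0,1}
  for j < n and x j = 0 for j >= n.\<close>

definition binary_matrix :: "nat \<Rightarrow> nat \<Rightarrow> (nat \<Rightarrow> nat \<Rightarrow> nat) \<Rightarrow> bool" where
  "binary_matrix t n M \<longleftrightarrow> (\<forall>i<t. \<forall>j<n. M i j \<in> {0, 1})"

definition binary_vec :: "nat \<Rightarrow> (nat \<Rightarrow> nat) \<Rightarrow> bool" where
  "binary_vec n x \<longleftrightarrow> (\<forall>j<n. x j \<in> {0, 1}) \<and> (\<forall>j\<ge>n. x j = 0)"

definition hamming_weight :: "nat \<Rightarrow> (nat \<Rightarrow> nat) \<Rightarrow> nat" where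
  "hamming_weight n x = card {j. j < n \<and> x j \<noteq> 0}"

definition sparse :: "nat \<Rightarrow> nat \<Rightarrow> (nat \<Rightarrow> nat) \<Rightarrow> bool" where
  "sparse n k x \<longleftrightarrow> hamming_weight n x \<le> k"

definition mat_vec :: "nat \<Rightarrow> (nat \<Rightarrow> nat \<Rightarrow> nat) \<Rightarrow> (nat \<Rightarrow> nat) \<Rightarrow> nat \<Rightarrow> nat" where
  "mat_vec n M x i = (\<Sum>j<n. M i j * x j)"

definition runlength_constrained :: "nat \<Rightarrow> nat \<Rightarrow> nat \<Rightarrow> (nat \<Rightarrow> nat \<Rightarrow> nat) \<Rightarrow> bool" where
  "runlength_constrained d t n M \<longleftrightarrow>
     (\<forall>j<n. \<forall>i<t. \<forall>i'<t. M i j = 1 \<and> M i' j = 1 \<and> i < i' \<longrightarrow> i' - i \<ge> d + 1)"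

definition QNAGT_scheme :: "nat \<Rightarrow> nat \<Rightarrow> nat \<Rightarrow> (nat \<Rightarrow> nat \<Rightarrow> nat) \<Rightarrow> bool" where
  "QNAGT_scheme k t n M \<longleftrightarrow>
     (\<forall>x x'. binary_vec n x \<and> binary_vec n x' \<and> sparse n k x \<and> sparse n k x' \<and> x \<noteq> x'
        \<longrightarrow> (\<exists>i<t. mat_vec n M x i \<noteq> mat_vec n M x' i))"

end

theory Submission
  imports Defs "HOL-Probability.Probability"
begin


lemma integrable_Ico:
  fixes f :: "real \<Rightarrow> real"
  assumes c: "continuous_on UNIV f"
  shows "integrable lborel (\<lambda>x. indicator {a..<b} x * f x)"
proof -
  have "set_integrable lborel {a..b} f"
    by (rule borel_integrable_atLeastAtMost') (use c continuous_on_subset in blast)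
  then have "set_integrable lborel {a..<b} f"
    by (rule set_integrable_subset) auto
  then show ?thesis unfolding set_integrable_def by simp
qed

lemma lint_Ico:
  fixes F f :: "real \<Rightarrow> real"
  assumes "a \<le> b" and D: "\<And>x. (F has_real_derivative f x) (at x)" and c: "continuous_on UNIV f"
  shows "(LINT x|lborel. indicator {a..<b} x * f x) = F b - F a"
proof -
  have "(LINT x|lborel. indicator {a..b} x *\<^sub>R f x) = F b - F a"
    apply (rule integral_FTC_atLeastAtMost[OF assms(1)])
     apply (simp add: has_real_derivative_iff_has_vector_derivative[symmetric])
     apply (rule DERIV_subset[OF D], simp)
    using c continuous_on_subset by blast
  moreover have "(LINT x|lborel. indicator {a..<b} x * f x) = (LINT x|lborel. indicator {a..b} x *\<^sub>R f x)"
    apply (rule integral_cong_AE)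
    using borel_measurable_integrable[OF integrable_Ico[OF c]] apply simp
    using borel_measurable_integrable[OF borel_integrable_atLeastAtMost'[OF continuous_on_subset[OF c], unfolded set_integrable_def]] apply simp
    using AE_lborel_singleton[of b] by eventually_elim (auto simp: indicator_def)
  ultimately show ?thesis by simp
qed


definition qf :: "real \<Rightarrow> real \<Rightarrow> nat \<Rightarrow> real" where
  "qf \<mu> \<sigma> j = (LINT u|lborel. indicator {real j - 1/2..<real j + 1/2} u * normal_density \<mu> \<sigma> u)"

lemma cont_nd: "\<sigma> > 0 \<Longrightarrow> continuous_on UNIV (normal_density \<mu> \<sigma>)"
  unfolding normal_density_def by (intro continuous_intros) auto

lemma ind_sum_le1:
  assumes "finite J"
  shows "(\<Sum>j\<in>J. indicator {real j - 1/2..<real j + 1/2} u) \<le> (1::real)"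
proof -
  define j0 where "j0 = nat \<lfloor>u + 1/2\<rfloor>"
  have eq: "indicator {real j - 1/2..<real j + 1/2} u = (if j = j0 then indicator {real j - 1/2..<real j + 1/2} u else (0::real))" for j
  proof (cases "u \<in> {real j - 1/2..<real j + 1/2}")
    case True
    then have "real j - 1/2 \<le> u" "u < real j + 1/2" by auto
    then have "\<lfloor>u + 1/2\<rfloor> = int j" by (intro floor_unique) auto
    then have "j = j0" unfolding j0_def by simp
    then show ?thesis by simp
  qed (auto simp: indicator_def)
  have "(\<Sum>j\<in>J. indicator {real j - 1/2..<real j + 1/2} u) = (\<Sum>j\<in>J. (if j = j0 then indicator {real j - 1/2..<real j + 1/2} u else (0::real)))"
    by (rule sum.cong[OF refl eq])
  also have "\<dots> \<le> 1" using assms by (simp add: sum.delta indicator_def)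
  finally show ?thesis .
qed

lemma qf_sum:
  assumes "finite J" and s: "\<sigma> > 0"
  shows "(\<Sum>j\<in>J. qf \<mu> \<sigma> j) \<le> 1"
proof -
  have int: "\<And>j. integrable lborel (\<lambda>u. indicator {real j - 1/2..<real j + 1/2} u * normal_density \<mu> \<sigma> u)"
    by (rule integrable_Ico[OF cont_nd[OF s]])
  have "(\<Sum>j\<in>J. qf \<mu> \<sigma> j) = (LINT u|lborel. (\<Sum>j\<in>J. indicator {real j - 1/2..<real j + 1/2} u * normal_density \<mu> \<sigma> u))"
    unfolding qf_def using int by simp
  also have "\<dots> \<le> (LINT u|lborel. normal_density \<mu> \<sigma> u)"
  proof (rule integral_mono)
    show "integrable lborel (\<lambda>u. \<Sum>j\<in>J. indicator {real j - 1/2..<real j + 1/2} u * normal_density \<mu> \<sigma> u)"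
      using int by auto
    fix u
    have "(\<Sum>j\<in>J. indicator {real j - 1/2..<real j + 1/2} u * normal_density \<mu> \<sigma> u)
       = (\<Sum>j\<in>J. indicator {real j - 1/2..<real j + 1/2} u) * normal_density \<mu> \<sigma> u"
      by (simp add: sum_distrib_right)
    also have "\<dots> \<le> 1 * normal_density \<mu> \<sigma> u"
      by (rule mult_right_mono[OF ind_sum_le1[OF assms(1)]]) simp
    finally show "(\<Sum>j\<in>J. indicator {real j - 1/2..<real j + 1/2} u * normal_density \<mu> \<sigma> u) \<le> normal_density \<mu> \<sigma> u" by simp
  qed (use s in auto)
  also have "\<dots> = 1" by (rule integral_normal_density[OF s])
  finally show ?thesis .
qed

lemma qf_lower:
  fixes \<mu> \<sigma> :: real and j :: nat
  assumes s: "\<sigma> > 0"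
  defines "L \<equiv> ln (sqrt (2 * pi * \<sigma>\<^sup>2))"
  defines "a \<equiv> - L - ((real j - \<mu>)\<^sup>2 + 1/12) / (2 * \<sigma>\<^sup>2)"
  shows "exp a \<le> qf \<mu> \<sigma> j"
proof -
  define g where "g u = - (u - \<mu>)\<^sup>2 / (2 * \<sigma>\<^sup>2) - L" for u
  have Lpos: "sqrt (2 * pi * \<sigma>\<^sup>2) > 0" using s by (intro real_sqrt_gt_zero) auto
  have phi: "normal_density \<mu> \<sigma> u = exp (g u)" for u
  proof -
    have "exp (g u) = exp (- (u - \<mu>)\<^sup>2 / (2 * \<sigma>\<^sup>2)) / exp L" unfolding g_def by (rule exp_diff)
    also have "exp L = sqrt (2 * pi * \<sigma>\<^sup>2)" unfolding L_def using Lpos by (rule exp_ln)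
    finally show ?thesis unfolding normal_density_def by simp
  qed
  define f where "f u = exp a * (1 + g u - a)" for u
  define F where "F u = exp a * (u * (1 - a - L) - (u - \<mu>)^3 / (6 * \<sigma>\<^sup>2))" for u
  have cf: "continuous_on UNIV f" unfolding f_def g_def using s by (intro continuous_intros) auto
  have D: "(F has_real_derivative f u) (at u)" for u
    unfolding F_def f_def g_def
    using s by (auto intro!: derivative_eq_intros simp: field_simps power2_eq_square)
  have "(LINT u|lborel. indicator {real j - 1/2..<real j + 1/2} u * f u) = F (real j + 1/2) - F (real j - 1/2)"
    by (rule lint_Ico[OF _ D cf]) simp
  also have "\<dots> = exp a"
  proof -
    have "(real j + 1/2) * (1 - a - L) - (real j + 1/2 - \<mu>)^3 / (6 * \<sigma>\<^sup>2) -
         ((real j - 1/2) * (1 - a - L) - (real j - 1/2 - \<mu>)^3 / (6 * \<sigma>\<^sup>2)) = 1"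
      using s unfolding a_def by (simp add: field_simps power2_eq_square power3_eq_cube)
    then show ?thesis unfolding F_def by (simp add: right_diff_distrib[symmetric])
  qed
  finally have E: "(LINT u|lborel. indicator {real j - 1/2..<real j + 1/2} u * f u) = exp a" .
  have "(LINT u|lborel. indicator {real j - 1/2..<real j + 1/2} u * f u) \<le> qf \<mu> \<sigma> j"
    unfolding qf_def
  proof (rule integral_mono[OF integrable_Ico[OF cf] integrable_Ico[OF cont_nd[OF s]]])
    fix u
    have "f u \<le> exp (g u)"
    proof -
      have "exp a * (1 + (g u - a)) \<le> exp a * exp (g u - a)"
        by (rule mult_left_mono) (auto simp: exp_ge_add_one_self)
      then show ?thesis unfolding f_def by (simp add: exp_diff add_diff_eq)
    qed
    then show "indicator {real j - 1/2..<real j + 1/2} u * f u \<le> indicator {real j - 1/2..<real j + 1/2} u * normal_density \<mu> \<sigma> u"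
      by (simp add: phi indicator_def)
  qed
  with E show ?thesis by simp
qed



lemma card_eq_ind_sum:
  assumes "finite R"
  shows "card (A \<inter> R) = (\<Sum>j\<in>R. if j \<in> A then 1 else (0::nat))"
  using assms
proof (induction R rule: finite_induct)
  case (insert x F)
  then show ?case by (cases "x \<in> A") (auto simp: Int_insert_right)
qed simp

lemma count_supsets:
  assumes U: "finite U" and T: "T \<subseteq> U" and k: "card T \<le> k"
  shows "card {A. A \<subseteq> U \<and> card A = k \<and> T \<subseteq> A} = (card U - card T) choose (k - card T)"
proof -
  have fT: "finite T" using U T finite_subset by blast
  have "bij_betw (\<lambda>A. A - T) {A. A \<subseteq> U \<and> card A = k \<and> T \<subseteq> A} {B. B \<subseteq> U - T \<and> card B = k - card T}"
  proof (rule bij_betw_byWitness[where f'="\<lambda>B. B \<union> T"])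
    show "\<forall>a\<in>{A. A \<subseteq> U \<and> card A = k \<and> T \<subseteq> A}. a - T \<union> T = a" by auto
    show "\<forall>a'\<in>{B. B \<subseteq> U - T \<and> card B = k - card T}. a' \<union> T - T = a'" by auto
    show "(\<lambda>A. A - T) ` {A. A \<subseteq> U \<and> card A = k \<and> T \<subseteq> A} \<subseteq> {B. B \<subseteq> U - T \<and> card B = k - card T}"
    proof safe
      fix A assume "A \<subseteq> U" "T \<subseteq> A" "k = card A"
      then show "card (A - T) = card A - card T"
        using fT by (simp add: card_Diff_subset)
    qed auto
    show "(\<lambda>B. B \<union> T) ` {B. B \<subseteq> U - T \<and> card B = k - card T} \<subseteq> {A. A \<subseteq> U \<and> card A = k \<and> T \<subseteq> A}"
    proof safe
      fix B assume B: "B \<subseteq> U - T" "card B = k - card T"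
      have fB: "finite B" using B U finite_subset by blast
      have "B \<inter> T = {}" using B by auto
      then show "card (B \<union> T) = k" using B k fB fT by (simp add: card_Un_disjoint)
    qed (use T in auto)
  qed
  then have "card {A. A \<subseteq> U \<and> card A = k \<and> T \<subseteq> A} = card {B. B \<subseteq> U - T \<and> card B = k - card T}"
    by (rule bij_betw_same_card)
  also have "\<dots> = card (U - T) choose (k - card T)"
    using U by (intro n_subsets) auto
  also have "card (U - T) = card U - card T" using T fT by (simp add: card_Diff_subset)
  finally show ?thesis .
qed

lemma card_filter_sum:
  assumes "finite R"
  shows "card {j\<in>R. P j} = (\<Sum>j\<in>R. if P j then 1 else (0::nat))"
  using assms
proof (induction R rule: finite_induct)
  case (insert x F)
  have "{j \<in> insert x F. P j} = (if P x then insert x {j\<in>F. P j} else {j\<in>F. P j})" by auto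
  with insert show ?case by (cases "P x") auto
qed simp

lemma hyper_ineq_nat:
  fixes n k w :: nat
  assumes "1 \<le> k" "k \<le> n" "w \<le> n" "2 \<le> n"
  shows "(n choose k) * (w * (w - 1) * (if 2 \<le> k then (n - 2) choose (k - 2) else 0)) \<le> (w * ((n - 1) choose (k - 1)))\<^sup>2"
proof (cases "2 \<le> k \<and> 1 \<le> w")
  case False
  then show ?thesis by auto
next
  case True
  define N where "N = n choose k"
  define c1 where "c1 = (n - 1) choose (k - 1)"
  define c2 where "c2 = (n - 2) choose (k - 2)"
  have e1: "k * N = n * c1" unfolding N_def c1_def using assms by (intro times_binomial_minus1_eq) auto
  have e2: "(k - 1) * c1 = (n - 1) * c2"
  proof -
    have "(k - 1) * ((n - 1) choose (k - 1)) = (n - 1) * ((n - 1 - 1) choose (k - 1 - 1))"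
      using True by (intro times_binomial_minus1_eq) auto
    then show ?thesis unfolding c1_def c2_def by (simp add: diff_diff_add numeral_2_eq_2)
  qed
  obtain k0 w0 n0 where k0: "k = k0 + 1" and w0: "w = w0 + 1" and n0: "n = n0 + 1"
    using True assms by (metis add.commute le_Suc_ex one_le_numeral order_trans plus_1_eq_Suc)
  have key: "n * (k - 1) * (w - 1) \<le> k * (n - 1) * w"
  proof -
    have "w0 \<le> n0" using assms w0 n0 by simp
    then have "k0 * w0 \<le> k0 * n0" by (rule mult_left_mono) simp
    moreover have "(k0 + 1) * n0 * (w0 + 1) = k0 * n0 * w0 + k0 * n0 + n0 * w0 + n0" by (simp add: algebra_simps)
    moreover have "(n0 + 1) * k0 * w0 = k0 * n0 * w0 + k0 * w0" by (simp add: algebra_simps)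
    ultimately have "(n0 + 1) * k0 * w0 \<le> (k0 + 1) * n0 * (w0 + 1)" by linarith
    then show ?thesis using k0 w0 n0 by simp
  qed
  have "k * (n - 1) * (N * (w * (w - 1) * c2)) = (k * N) * ((n - 1) * c2) * w * (w - 1)" by (simp only: ac_simps)
  also have "\<dots> = n * c1 * ((k - 1) * c1) * w * (w - 1)" using e1 e2 by simp
  also have "\<dots> = (n * (k - 1) * (w - 1)) * (w * c1 * c1)" by (simp only: ac_simps)
  also have "\<dots> \<le> (k * (n - 1) * w) * (w * c1 * c1)" using key by (rule mult_right_mono) simp
  also have "\<dots> = k * (n - 1) * (w * c1)\<^sup>2" by (simp only: ac_simps power2_eq_square)
  finally have "k * (n - 1) * (N * (w * (w - 1) * c2)) \<le> k * (n - 1) * (w * c1)\<^sup>2" .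
  moreover have "k * (n - 1) > 0" using assms by simp
  ultimately have "N * (w * (w - 1) * c2) \<le> (w * c1)\<^sup>2" by (simp add: mult_le_cancel1 del: mult_pos_pos) 
  then show ?thesis using True unfolding N_def c1_def c2_def by simp
qed

lemma hyper_moments:
  fixes n k :: nat and R :: "nat set"
  defines "S \<equiv> {A. A \<subseteq> {..<n} \<and> card A = k}"
  assumes R: "R \<subseteq> {..<n}" and k: "1 \<le> k" "k \<le> n"
  shows "(\<Sum>A\<in>S. card (A \<inter> R)) = card R * ((n - 1) choose (k - 1))"
    and "(\<Sum>A\<in>S. (card (A \<inter> R))\<^sup>2) = card R * ((n - 1) choose (k - 1)) + card R * (card R - 1) * (if 2 \<le> k then (n - 2) choose (k - 2) else 0)"
proof -
  define c1 where "c1 = (n - 1) choose (k - 1)"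
  define c2 where "c2 = (if 2 \<le> k then (n - 2) choose (k - 2) else 0)"
  have fS: "finite S" unfolding S_def by (rule finite_subset[of _ "Pow {..<n}"]) auto
  have fR: "finite R" using R finite_subset by blast
  have cnt1: "card {A\<in>S. j \<in> A} = c1" if "j \<in> R" for j
  proof -
    have "{A\<in>S. j \<in> A} = {A. A \<subseteq> {..<n} \<and> card A = k \<and> {j} \<subseteq> A}" unfolding S_def by auto
    also have "card \<dots> = (card {..<n} - card {j}) choose (k - card {j})"
      using that R k by (intro count_supsets) auto
    finally show ?thesis unfolding c1_def by simp
  qed
  have cnt2: "card {A\<in>S. j \<in> A \<and> j' \<in> A} = c2" if "j \<in> R" "j' \<in> R" "j \<noteq> j'" for j j'
  proof (cases "2 \<le> k")
    case True
    have "{A\<in>S. j \<in> A \<and> j' \<in> A} = {A. A \<subseteq> {..<n} \<and> card A = k \<and> {j, j'} \<subseteq> A}" unfolding S_def by auto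
    also have "card \<dots> = (card {..<n} - card {j, j'}) choose (k - card {j, j'})"
      using that R True by (intro count_supsets) auto
    finally show ?thesis unfolding c2_def using True that by (simp add: numeral_2_eq_2)
  next
    case False
    have "{A\<in>S. j \<in> A \<and> j' \<in> A} = {}"
    proof (rule ccontr)
      assume "{A\<in>S. j \<in> A \<and> j' \<in> A} \<noteq> {}"
      then obtain A where A: "A \<in> S" "j \<in> A" "j' \<in> A" by auto
      then have "finite A" "card A = k" unfolding S_def using finite_subset by auto
      then have "card {j, j'} \<le> card A" using A by (intro card_mono) auto
      then show False using False that \<open>card A = k\<close> by simp
    qed
    then have "card {A\<in>S. j \<in> A \<and> j' \<in> A} = 0" by (simp only: card.empty)
    then show ?thesis unfolding c2_def using False by simp
  qed
  have ind: "card (A \<inter> R) = (\<Sum>j\<in>R. if j \<in> A then 1 else (0::nat))" for A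
    by (rule card_eq_ind_sum[OF fR])
  show "(\<Sum>A\<in>S. card (A \<inter> R)) = card R * ((n - 1) choose (k - 1))"
  proof -
    have "(\<Sum>A\<in>S. card (A \<inter> R)) = (\<Sum>A\<in>S. \<Sum>j\<in>R. if j \<in> A then 1 else (0::nat))"
      by (simp add: ind)
    also have "\<dots> = (\<Sum>j\<in>R. \<Sum>A\<in>S. if j \<in> A then 1 else (0::nat))" by (rule sum.swap)
    also have "\<dots> = (\<Sum>j\<in>R. card {A\<in>S. j \<in> A})" by (simp add: card_filter_sum[OF fS])
    also have "\<dots> = (\<Sum>j\<in>R. c1)" by (rule sum.cong) (auto simp: cnt1)
    finally show ?thesis unfolding c1_def by simp
  qed
  show "(\<Sum>A\<in>S. (card (A \<inter> R))\<^sup>2) = card R * ((n - 1) choose (k - 1)) + card R * (card R - 1) * (if 2 \<le> k then (n - 2) choose (k - 2) else 0)"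
  proof -
    have sq: "(card (A \<inter> R))\<^sup>2 = (\<Sum>j\<in>R. \<Sum>j'\<in>R. if j \<in> A \<and> j' \<in> A then 1 else (0::nat))" for A
      unfolding ind power2_eq_square sum_product by (intro sum.cong refl) auto
    have "(\<Sum>A\<in>S. (card (A \<inter> R))\<^sup>2) = (\<Sum>A\<in>S. \<Sum>j\<in>R. \<Sum>j'\<in>R. if j \<in> A \<and> j' \<in> A then 1 else (0::nat))"
      by (simp add: sq)
    also have "\<dots> = (\<Sum>j\<in>R. \<Sum>A\<in>S. \<Sum>j'\<in>R. if j \<in> A \<and> j' \<in> A then 1 else (0::nat))" by (rule sum.swap)
    also have "\<dots> = (\<Sum>j\<in>R. \<Sum>j'\<in>R. \<Sum>A\<in>S. if j \<in> A \<and> j' \<in> A then 1 else (0::nat))"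
      by (intro sum.cong refl sum.swap)
    also have "\<dots> = (\<Sum>j\<in>R. \<Sum>j'\<in>R. card {A\<in>S. j \<in> A \<and> j' \<in> A})"
      by (simp add: card_filter_sum[OF fS])
    also have "\<dots> = (\<Sum>j\<in>R. \<Sum>j'\<in>R. if j = j' then c1 else c2)"
    proof (intro sum.cong refl)
      fix j j' assume "j \<in> R" "j' \<in> R"
      then show "card {A\<in>S. j \<in> A \<and> j' \<in> A} = (if j = j' then c1 else c2)"
        using cnt1 cnt2 by auto
    qed
    also have "\<dots> = (\<Sum>j\<in>R. c1 + (card R - 1) * c2)"
    proof (rule sum.cong[OF refl])
      fix j assume j: "j \<in> R"
      have "(\<Sum>j'\<in>R. if j = j' then c1 else c2) = (\<Sum>j'\<in>insert j (R - {j}). if j = j' then c1 else c2)"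
        using j by (simp add: insert_absorb)
      also have "\<dots> = c1 + (\<Sum>j'\<in>R - {j}. if j = j' then c1 else c2)"
        using fR by (subst sum.insert) auto
      also have "(\<Sum>j'\<in>R - {j}. if j = j' then c1 else c2) = (\<Sum>j'\<in>R - {j}. c2)"
        by (rule sum.cong) auto
      also have "\<dots> = (card R - 1) * c2" using j fR by simp
      finally show "(\<Sum>j'\<in>R. if j = j' then c1 else c2) = c1 + (card R - 1) * c2" .
    qed
    also have "\<dots> = card R * c1 + card R * (card R - 1) * c2" by (simp add: algebra_simps)
    finally show ?thesis unfolding c1_def c2_def .
  qed
qed



lemma binom_step: "1 \<le> n \<Longrightarrow> Suc j * (n choose Suc j) = (n - j) * (n choose j)"
proof -
  assume "1 \<le> n"
  then obtain m where m: "n = Suc m" by (cases n) auto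
  have "Suc j * (Suc m choose Suc j) = Suc m * (m choose j)" by (rule Suc_times_binomial)
  moreover have "(Suc m - j) * (Suc m choose j) = Suc m * ((Suc m - 1) choose j)" by (rule binomial_absorb_comp)
  ultimately show ?thesis using m by simp
qed

lemma binom_max_term:
  fixes n k :: nat
  assumes k: "0 < k" "k < n"
  shows "real n ^ n \<le> real (n + 1) * (real (n choose k) * real k ^ k * real (n - k) ^ (n - k))"
proof -
  define a where "a j = real (n choose j) * real k ^ j * real (n - k) ^ (n - j)" for j
  have step: "a (Suc j) * (real (Suc j) * real (n - k)) = a j * (real (n - j) * real k)" if "j < n" for j
  proof -
    have b: "real (Suc j) * real (n choose Suc j) = real (n - j) * real (n choose j)"
      using binom_step[of n j] that by (metis of_nat_mult One_nat_def Suc_leI gr_zeroI not_less0 zero_less_Suc less_trans_Suc)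
    have p: "real (n - k) ^ (n - Suc j) * real (n - k) = real (n - k) ^ (n - j)"
      using that by (metis Suc_diff_Suc power_Suc mult.commute)
    have "a (Suc j) * (real (Suc j) * real (n - k)) = (real (Suc j) * real (n choose Suc j)) * (real k ^ Suc j) * (real (n - k) ^ (n - Suc j) * real (n - k))"
      unfolding a_def by (simp only: ac_simps)
    also have "\<dots> = real (n - j) * real (n choose j) * (real k ^ Suc j) * real (n - k) ^ (n - j)"
      using b p by simp
    also have "\<dots> = a j * (real (n - j) * real k)" unfolding a_def by (simp add: ac_simps)
    finally show ?thesis .
  qed
  have pos: "real (Suc j) * real (n - k) > 0" for j using k by simp
  have up: "a j \<le> a (Suc j)" if "j < k" for j
  proof -
    have "real (Suc j) * real (n - k) \<le> real (n - j) * real k"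
    proof -
      have "real (n - j) = real n - real j" "real (n - k) = real n - real k" using that k by auto
      moreover have "real n * (real j + 1) \<le> real k * (real n + 1)"
      proof -
        have "real j + 1 \<le> real k" using that by linarith
        then have "real n * (real j + 1) \<le> real n * real k" by (rule mult_left_mono) simp
        also have "\<dots> \<le> real k * (real n + 1)" by (simp add: algebra_simps)
        finally show ?thesis .
      qed
      ultimately show ?thesis by (simp add: algebra_simps)
    qed
    then have "a j * (real (Suc j) * real (n - k)) \<le> a j * (real (n - j) * real k)"
      by (rule mult_left_mono) (simp add: a_def)
    also have "\<dots> = a (Suc j) * (real (Suc j) * real (n - k))" using step[of j] that k by simp
    finally show ?thesis using pos[of j] by (rule mult_right_le_imp_le)
  qed
  have down: "a (Suc j) \<le> a j" if "k \<le> j" "j < n" for j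
  proof -
    have "real (n - j) * real k \<le> real (Suc j) * real (n - k)"
    proof -
      have "real (n - j) = real n - real j" "real (n - k) = real n - real k" using that k by auto
      moreover have "real k * (real n + 1) \<le> real n * (real j + 1)"
      proof -
        have "real k \<le> real j" "real k \<le> real n" using that k by auto
        have "real k * real n \<le> real j * real n" using \<open>real k \<le> real j\<close> by (rule mult_right_mono) simp
        with \<open>real k \<le> real n\<close> show ?thesis by (simp add: algebra_simps)
      qed
      ultimately show ?thesis by (simp add: algebra_simps)
    qed
    then have "a (Suc j) * (real (Suc j) * real (n - k)) \<le> a j * (real (Suc j) * real (n - k))"
      unfolding step[OF that(2)] by (rule mult_left_mono) (simp add: a_def)
    then show ?thesis using pos[of j] by (rule mult_right_le_imp_le)
  qed
  have le: "a j \<le> a k" if "j \<le> n" for j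
  proof (cases "j \<le> k")
    case True
    have "a j \<le> a m" if "j \<le> m" "m \<le> k" for m
      using that
    proof (induction m rule: dec_induct)
      case base then show ?case by simp
    next
      case (step m) then show ?case using up[of m] by simp
    qed
    then show ?thesis using True by simp
  next
    case False
    have "a m \<le> a k" if "k \<le> m" "m \<le> n" for m
      using that
    proof (induction m rule: dec_induct)
      case base then show ?case by simp
    next
      case (step m) then show ?case using down[of m] by simp
    qed
    then show ?thesis using False that by simp
  qed
  have "real n ^ n = (real k + real (n - k)) ^ n" using k by simp
  also have "\<dots> = (\<Sum>j\<le>n. a j)" unfolding a_def binomial_ring by simp
  also have "\<dots> \<le> (\<Sum>j\<le>n. a k)" by (rule sum_mono) (use le in auto)
  also have "\<dots> = real (n + 1) * a k" by simp
  finally show ?thesis unfolding a_def .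
qed

lemma ln2_ge_half: "ln (2::real) \<ge> 1/2"
proof -
  have "ln (1/2::real) \<le> 1/2 - 1" by (rule ln_le_minus_one) simp
  then show ?thesis by (simp add: ln_div)
qed

lemma binom_lower:
  fixes n k :: nat
  assumes n: "2 \<le> n" and k: "1 \<le> k" "k \<le> n"
  shows "\<exists>k'. 1 \<le> k' \<and> k' \<le> k \<and> k' \<le> n \<and>
           real k * ln (1 + real n / real k) \<le> ln (real (n choose k')) + ln (real n + 1)"
proof (cases "2 * k \<le> n")
  case True
  define N where "N = real n"
  define K where "K = real k"
  have KN: "0 < K" "K < N" "2 * K \<le> N" unfolding N_def K_def using True k by auto
  have Cpos: "real (n choose k) > 0" using k by simp
  have nk: "real (n - k) = N - K" unfolding N_def K_def using k by simp
  have "real n ^ n \<le> real (n + 1) * (real (n choose k) * real k ^ k * real (n - k) ^ (n - k))"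
    using True k by (intro binom_max_term) auto
  then have "ln (real n ^ n) \<le> ln (real (n + 1) * (real (n choose k) * real k ^ k * real (n - k) ^ (n - k)))"
    using n Cpos True k by (subst ln_le_cancel_iff) (auto intro!: mult_pos_pos)
  also have "\<dots> = ln (real n + 1) + ln (real (n choose k)) + real k * ln (real k) + real (n - k) * ln (real (n - k))"
    using Cpos True k by (simp add: ln_mult ln_realpow)
  finally have main: "N * ln N \<le> ln (N + 1) + ln (real (n choose k)) + K * ln K + (N - K) * ln (N - K)"
    using n unfolding N_def K_def nk[unfolded N_def K_def] by (simp add: ln_realpow)
  have h1: "ln (N + K) - ln N \<le> K / N"
  proof -
    have "ln ((N + K) / N) \<le> (N + K) / N - 1" using KN by (intro ln_le_minus_one) auto
    then show ?thesis using KN by (simp add: ln_div field_simps)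
  qed
  have h2: "ln (N - K) - ln N \<le> - (K / N)"
  proof -
    have "ln ((N - K) / N) \<le> (N - K) / N - 1" using KN by (intro ln_le_minus_one) auto
    then show ?thesis using KN by (simp add: ln_div field_simps)
  qed
  have h1': "K * (ln (N + K) - ln N) \<le> K * (K / N)" using h1 KN by (intro mult_left_mono) auto
  have h2': "(N - K) * (ln (N - K) - ln N) \<le> (N - K) * (- (K / N))" using h2 KN by (intro mult_left_mono) auto
  have h3: "K * (K / N) + (N - K) * (- (K / N)) \<le> 0"
  proof -
    have "K * (K / N) + (N - K) * (- (K / N)) = (2 * K - N) * (K / N)" using KN by (simp add: field_simps)
    also have "\<dots> \<le> 0" using KN by (intro mult_nonpos_nonneg) auto
    finally show ?thesis .
  qed
  have eq: "K * ln (1 + N / K) = K * ln (N + K) - K * ln K"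
  proof -
    have "1 + N / K = (N + K) / K" using KN by (simp add: field_simps)
    then show ?thesis using KN by (simp add: ln_div right_diff_distrib)
  qed
  have "K * ln (1 + N / K) \<le> ln (real (n choose k)) + ln (N + 1)"
    using main h1' h2' h3 eq by (simp add: algebra_simps)
  then show ?thesis using k unfolding N_def K_def by (intro exI[of _ k]) auto
next
  case False
  define m where "m = n div 2"
  have m: "1 \<le> m" "m \<le> k" "m \<le> n" unfolding m_def using False n by auto
  have "(2::real) ^ n = (\<Sum>j\<le>n. real (n choose j))"
    using choose_row_sum[of n] by (metis of_nat_numeral of_nat_power of_nat_sum)
  also have "\<dots> \<le> (\<Sum>j\<le>n. real (n choose m))"
    unfolding m_def by (intro sum_mono) (simp add: binomial_maximum)
  also have "\<dots> = (real n + 1) * real (n choose m)" by simp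
  finally have b: "(2::real) ^ n \<le> (real n + 1) * real (n choose m)" .
  have Cpos: "real (n choose m) > 0" using m by simp
  have "real n * ln 2 = ln ((2::real) ^ n)" by (simp add: ln_realpow)
  also have "\<dots> \<le> ln ((real n + 1) * real (n choose m))" using b Cpos by (subst ln_le_cancel_iff) auto
  also have "\<dots> = ln (real n + 1) + ln (real (n choose m))" using Cpos by (simp add: ln_mult)
  finally have main: "real n * ln 2 \<le> ln (real n + 1) + ln (real (n choose m))" .
  define x where "x = real n / real k"
  have x1: "x \<ge> 1" unfolding x_def using k by simp
  have "ln ((1 + x) / 2) \<le> (1 + x) / 2 - 1" using x1 by (intro ln_le_minus_one) auto
  then have "ln (1 + x) \<le> ln 2 + (x - 1) / 2" using x1 by (simp add: ln_div field_simps)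
  also have "\<dots> \<le> ln 2 + (x - 1) * ln 2"
  proof -
    have "(x - 1) * (1/2) \<le> (x - 1) * ln 2" by (rule mult_left_mono) (use x1 ln2_ge_half in auto)
    then show ?thesis by simp
  qed
  also have "\<dots> = x * ln 2" by (simp add: algebra_simps)
  finally have "ln (1 + x) \<le> x * ln 2" .
  then have "real k * ln (1 + x) \<le> real k * (x * ln 2)" by (intro mult_left_mono) auto
  also have "real k * (x * ln 2) = real n * ln 2" unfolding x_def using k by simp
  finally have "real k * ln (1 + real n / real k) \<le> real n * ln 2" unfolding x_def .
  with main m show ?thesis by (intro exI[of _ m]) auto
qed



definition Rset :: "nat \<Rightarrow> (nat \<Rightarrow> nat \<Rightarrow> nat) \<Rightarrow> nat \<Rightarrow> nat set" where
  "Rset n M i = {j. j < n \<and> M i j = 1}"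

definition vecA :: "nat set \<Rightarrow> nat \<Rightarrow> nat" where
  "vecA A = (\<lambda>j. if j \<in> A then 1 else 0)"

lemma mv_card:
  assumes bin: "binary_matrix t n M" and i: "i < t" and A: "A \<subseteq> {..<n}"
  shows "mat_vec n M (vecA A) i = card (A \<inter> Rset n M i)"
proof -
  have "mat_vec n M (vecA A) i = (\<Sum>j<n. if j \<in> A \<and> M i j = 1 then 1 else 0)"
    unfolding mat_vec_def vecA_def
  proof (rule sum.cong[OF refl])
    fix j assume "j \<in> {..<n}"
    then have "M i j \<in> {0, 1}" using bin i unfolding binary_matrix_def by auto
    then show "M i j * (if j \<in> A then 1 else 0) = (if j \<in> A \<and> M i j = 1 then 1 else 0)" by auto
  qed
  also have "\<dots> = card {j\<in>{..<n}. j \<in> A \<and> M i j = 1}" by (rule card_filter_sum[symmetric]) simp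
  also have "{j\<in>{..<n}. j \<in> A \<and> M i j = 1} = A \<inter> Rset n M i" unfolding Rset_def using A by auto
  finally show ?thesis .
qed

lemma vecA_props:
  assumes "A \<subseteq> {..<n}" "card A \<le> k"
  shows "binary_vec n (vecA A)" "Defs.sparse n k (vecA A)"
proof -
  show "binary_vec n (vecA A)" unfolding binary_vec_def vecA_def using assms by auto
  have "{j. j < n \<and> vecA A j \<noteq> 0} = A" unfolding vecA_def using assms by auto
  then show "Defs.sparse n k (vecA A)" unfolding Defs.sparse_def hamming_weight_def using assms by simp
qed

lemma inj_f:
  assumes bin: "binary_matrix t n M" and Q: "QNAGT_scheme k t n M" and kk: "k' \<le> k"
  shows "inj_on (\<lambda>A. restrict (\<lambda>i. card (A \<inter> Rset n M i)) {..<t}) {A. A \<subseteq> {..<n} \<and> card A = k'}"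
proof (rule inj_onI)
  fix A B assume A: "A \<in> {A. A \<subseteq> {..<n} \<and> card A = k'}" and B: "B \<in> {A. A \<subseteq> {..<n} \<and> card A = k'}"
    and eq: "restrict (\<lambda>i. card (A \<inter> Rset n M i)) {..<t} = restrict (\<lambda>i. card (B \<inter> Rset n M i)) {..<t}"
  show "A = B"
  proof (rule ccontr)
    assume ne: "A \<noteq> B"
    have "vecA A \<noteq> vecA B"
    proof
      assume "vecA A = vecA B"
      then have "\<forall>j. (j \<in> A) = (j \<in> B)" unfolding vecA_def by (metis one_neq_zero)
      then show False using ne by auto
    qed
    moreover have "binary_vec n (vecA A)" "Defs.sparse n k (vecA A)" "binary_vec n (vecA B)" "Defs.sparse n k (vecA B)"
      using vecA_props[of A n k] vecA_props[of B n k] A B kk by auto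
    ultimately obtain i where i: "i < t" "mat_vec n M (vecA A) i \<noteq> mat_vec n M (vecA B) i"
      using Q unfolding QNAGT_scheme_def by blast
    then have "card (A \<inter> Rset n M i) \<noteq> card (B \<inter> Rset n M i)"
      using mv_card[OF bin i(1)] A B by auto
    moreover have "card (A \<inter> Rset n M i) = card (B \<inter> Rset n M i)"
      using fun_cong[OF eq, of i] i(1) by simp
    ultimately show False by simp
  qed
qed

lemma block_le:
  assumes rl: "runlength_constrained d t n M" and b: "b * (d + 1) + (d + 1) \<le> t" and fA: "finite A"
  shows "(\<Sum>i\<in>{b * (d + 1)..<b * (d + 1) + (d + 1)}. card (A \<inter> Rset n M i)) \<le> card A"
proof -
  let ?I = "{b * (d + 1)..<b * (d + 1) + (d + 1)}"
  have disj: "(A \<inter> Rset n M i) \<inter> (A \<inter> Rset n M i') = {}" if "i \<in> ?I" "i' \<in> ?I" "i \<noteq> i'" for i i'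
  proof (rule ccontr)
    assume "(A \<inter> Rset n M i) \<inter> (A \<inter> Rset n M i') \<noteq> {}"
    then obtain j where j: "j < n" "M i j = 1" "M i' j = 1" unfolding Rset_def by auto
    have lt: "i < t" "i' < t" using that b by auto
    show False
    proof (cases "i < i'")
      case True
      then have "i' - i \<ge> d + 1" using rl j lt unfolding runlength_constrained_def by blast
      then show False using that by auto
    next
      case False
      then have "i' < i" using that by auto
      then have "i - i' \<ge> d + 1" using rl j lt unfolding runlength_constrained_def by blast
      then show False using that by auto
    qed
  qed
  have "(\<Sum>i\<in>?I. card (A \<inter> Rset n M i)) = card (\<Union>i\<in>?I. A \<inter> Rset n M i)"
    by (rule card_UN_disjoint[symmetric]) (use fA disj in auto)
  also have "\<dots> \<le> card A" by (rule card_mono[OF fA]) auto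
  finally show ?thesis .
qed

lemma gibbs:
  fixes f :: "'a \<Rightarrow> 'b" and Q :: "'b \<Rightarrow> real"
  assumes fS: "finite S" and ne: "S \<noteq> {}" and inj: "inj_on f S"
    and Qs: "(\<Sum>y\<in>f ` S. Q y) \<le> 1" and Qp: "\<And>y. y \<in> f ` S \<Longrightarrow> Q y > 0"
  shows "ln (real (card S)) \<le> (\<Sum>x\<in>S. - ln (Q (f x))) / real (card S)"
proof -
  define N where "N = real (card S)"
  have Np: "N > 0" unfolding N_def using fS ne by (simp add: card_gt_0_iff)
  have "(\<Sum>x\<in>S. ln N + ln (Q (f x))) \<le> (\<Sum>x\<in>S. N * Q (f x) - 1)"
  proof (rule sum_mono)
    fix x assume "x \<in> S"
    then have "Q (f x) > 0" using Qp by auto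
    then have "ln (N * Q (f x)) \<le> N * Q (f x) - 1" using Np by (intro ln_le_minus_one) auto
    then show "ln N + ln (Q (f x)) \<le> N * Q (f x) - 1" using Np \<open>Q (f x) > 0\<close> by (simp add: ln_mult)
  qed
  also have "\<dots> = N * (\<Sum>x\<in>S. Q (f x)) - N" unfolding N_def by (simp add: sum_subtractf sum_distrib_left)
  also have "(\<Sum>x\<in>S. Q (f x)) = (\<Sum>y\<in>f ` S. Q y)" using inj by (simp add: sum.reindex)
  also have "N * (\<Sum>y\<in>f ` S. Q y) - N \<le> 0" using Qs Np by (simp add: mult_le_cancel_left1)
  finally have "N * ln N + (\<Sum>x\<in>S. ln (Q (f x))) \<le> 0" unfolding N_def by (simp add: sum.distrib)
  then have "N * ln N \<le> (\<Sum>x\<in>S. - ln (Q (f x)))" by (simp add: sum_negf)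
  then show ?thesis using Np unfolding N_def by (simp add: field_simps)
qed

lemma var_le_mean:
  fixes n k :: nat and R :: "nat set"
  defines "S \<equiv> {A. A \<subseteq> {..<n} \<and> card A = k}"
  assumes R: "R \<subseteq> {..<n}" and k: "1 \<le> k" "k \<le> n" and n: "2 \<le> n"
  shows "(\<Sum>A\<in>S. (real (card (A \<inter> R)) - (\<Sum>B\<in>S. real (card (B \<inter> R))) / real (card S))\<^sup>2) / real (card S)
         \<le> (\<Sum>B\<in>S. real (card (B \<inter> R))) / real (card S)"
proof -
  define N where "N = card S"
  define s1 where "s1 = (\<Sum>A\<in>S. card (A \<inter> R))"
  define s2 where "s2 = (\<Sum>A\<in>S. (card (A \<inter> R))\<^sup>2)"
  have fR: "finite R" using R finite_subset by blast
  have w: "card R \<le> n" using card_mono[OF _ R] by simp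
  have NS: "N = n choose k" unfolding N_def S_def using n_subsets[of "{..<n}" k] by simp
  have Np: "N > 0" using NS k by simp
  have m: "s1 = card R * ((n - 1) choose (k - 1))"
          "s2 = card R * ((n - 1) choose (k - 1)) + card R * (card R - 1) * (if 2 \<le> k then (n - 2) choose (k - 2) else 0)"
    unfolding s1_def s2_def S_def using hyper_moments[OF R k] by auto
  have hi: "(n choose k) * (card R * (card R - 1) * (if 2 \<le> k then (n - 2) choose (k - 2) else 0)) \<le> (card R * ((n - 1) choose (k - 1)))\<^sup>2"
    by (rule hyper_ineq_nat[OF k w n])
  have nat_ineq: "N * s2 \<le> s1\<^sup>2 + N * s1"
  proof -
    have "N * s2 = N * s1 + (n choose k) * (card R * (card R - 1) * (if 2 \<le> k then (n - 2) choose (k - 2) else 0))"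
      unfolding m NS by (rule distrib_left)
    also have "\<dots> \<le> N * s1 + s1\<^sup>2" using hi unfolding m(1)[symmetric] by (rule add_left_mono)
    finally show ?thesis by (simp add: add.commute)
  qed
  then have real_ineq: "real N * real s2 \<le> (real s1)\<^sup>2 + real N * real s1"
    by (metis of_nat_add of_nat_le_iff of_nat_mult of_nat_power)
  define \<mu> where "\<mu> = real s1 / real N"
  have rs1: "(\<Sum>B\<in>S. real (card (B \<inter> R))) = real s1" unfolding s1_def by simp
  have rs2: "(\<Sum>B\<in>S. (real (card (B \<inter> R)))\<^sup>2) = real s2" unfolding s2_def by simp
  have "(\<Sum>A\<in>S. (real (card (A \<inter> R)) - \<mu>)\<^sup>2) = (\<Sum>A\<in>S. (real (card (A \<inter> R)))\<^sup>2 - 2 * \<mu> * real (card (A \<inter> R)) + \<mu>\<^sup>2)"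
    by (rule sum.cong) (auto simp: power2_eq_square algebra_simps)
  also have "\<dots> = real s2 - 2 * \<mu> * real s1 + real N * \<mu>\<^sup>2"
    unfolding rs2[symmetric] rs1[symmetric] N_def by (simp add: sum.distrib sum_subtractf sum_distrib_left)
  also have "\<dots> = real s2 - (real s1)\<^sup>2 / real N"
    unfolding \<mu>_def using Np by (simp add: field_simps power2_eq_square)
  finally have eq: "(\<Sum>A\<in>S. (real (card (A \<inter> R)) - \<mu>)\<^sup>2) = real s2 - (real s1)\<^sup>2 / real N" .
  have "(real s2 - (real s1)\<^sup>2 / real N) / real N \<le> real s1 / real N"
  proof -
    have "real s2 - (real s1)\<^sup>2 / real N \<le> real s1"
      using real_ineq Np by (simp add: field_simps)
    then show ?thesis using Np by (simp add: divide_right_mono)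
  qed
  then show ?thesis unfolding rs1 using eq unfolding \<mu>_def N_def by simp
qed



lemma core:
  fixes n k k' d t m :: nat and M :: "nat \<Rightarrow> nat \<Rightarrow> nat"
  assumes tm: "t = m * (d + 1)" and bin: "binary_matrix t n M" and rl: "runlength_constrained d t n M"
    and Qs: "QNAGT_scheme k t n M"
    and k': "1 \<le> k'" "k' \<le> k" "k' \<le> n" and n: "2 \<le> n"
  shows "ln (real (n choose k')) \<le> real t / 2 * ln (2 * pi * exp 1 * (real k / real (d + 1) + 1/12))"
proof -
  define S where "S = {A. A \<subseteq> {..<n} \<and> card A = k'}"
  define D where "D = d + 1"
  define N where "N = real (card S)"
  define Y where "Y i A = card (A \<inter> Rset n M i)" for i A
  define f where "f A = restrict (\<lambda>i. Y i A) {..<t}" for A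
  define \<mu> where "\<mu> i = (\<Sum>B\<in>S. real (Y i B)) / N" for i
  define r where "r = real k / real D"
  define \<sigma> where "\<sigma> = sqrt (r + 1/12)"
  define L where "L = ln (sqrt (2 * pi * \<sigma>\<^sup>2))"
  define Qf where "Qf y = (\<Prod>i<t. qf (\<mu> i) \<sigma> (y i))" for y
  define V where "V i = (\<Sum>A\<in>S. (real (Y i A) - \<mu> i)\<^sup>2) / N" for i
  have fS: "finite S" unfolding S_def by (rule finite_subset[of _ "Pow {..<n}"]) auto
  have cardS: "card S = n choose k'" unfolding S_def using n_subsets[of "{..<n}" k'] by simp
  have Npos: "N > 0" unfolding N_def cardS using k' by simp
  have ne: "S \<noteq> {}" using Npos fS unfolding N_def by auto
  have rpos: "r \<ge> 0" unfolding r_def by simp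
  have spos: "\<sigma> > 0" unfolding \<sigma>_def using rpos by simp
  have s2: "\<sigma>\<^sup>2 = r + 1/12" unfolding \<sigma>_def using rpos by simp
  have inj: "inj_on f S" unfolding f_def Y_def S_def by (rule inj_f[OF bin Qs k'(2)])
  have img: "f ` S \<subseteq> PiE {..<t} (\<lambda>_. {..n})"
  proof
    fix y assume "y \<in> f ` S"
    then obtain A where A: "A \<in> S" "y = f A" by auto
    have "Y i A \<le> n" for i
    proof -
      have fA: "finite A" using A(1) unfolding S_def using finite_subset by blast
      have "Y i A \<le> card A" unfolding Y_def by (rule card_mono[OF fA]) auto
      also have "card A = k'" using A(1) unfolding S_def by simp
      finally show ?thesis using k' by simp
    qed
    then show "y \<in> PiE {..<t} (\<lambda>_. {..n})" unfolding A(2) f_def by (simp add: restrict_PiE_iff)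
  qed
  have qpos: "qf x \<sigma> j > 0" for x j
    using qf_lower[OF spos, of j x] by (meson exp_gt_zero less_le_trans)
  have Qsum: "(\<Sum>y\<in>f ` S. Qf y) \<le> 1"
  proof -
    have "(\<Sum>y\<in>f ` S. Qf y) \<le> (\<Sum>y\<in>PiE {..<t} (\<lambda>_. {..n}). Qf y)"
      by (rule sum_mono2[OF finite_PiE img]) (auto simp: Qf_def qpos less_imp_le intro!: prod_nonneg)
    also have "\<dots> = (\<Prod>i<t. \<Sum>j\<le>n. qf (\<mu> i) \<sigma> j)"
      unfolding Qf_def by (rule prod_sum_PiE[symmetric]) auto
    also have "\<dots> \<le> 1"
      by (rule prod_le_1) (auto intro!: sum_nonneg qf_sum spos simp: qpos less_imp_le)
    finally show ?thesis .
  qed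
  have Qpos: "Qf y > 0" for y unfolding Qf_def by (rule prod_pos) (simp add: qpos)
  have G: "ln N \<le> (\<Sum>A\<in>S. - ln (Qf (f A))) / N"
    unfolding N_def by (rule gibbs[OF fS ne inj Qsum Qpos])
  have hterm: "- ln (Qf (f A)) \<le> (\<Sum>i<t. L + ((real (Y i A) - \<mu> i)\<^sup>2 + 1/12) / (2 * \<sigma>\<^sup>2))" for A
  proof -
    have "Qf (f A) = (\<Prod>i<t. qf (\<mu> i) \<sigma> (Y i A))" unfolding Qf_def f_def by (rule prod.cong) auto
    moreover have "ln (\<Prod>i<t. qf (\<mu> i) \<sigma> (Y i A)) = (\<Sum>i<t. ln (qf (\<mu> i) \<sigma> (Y i A)))"
      by (rule ln_prod) (simp_all add: qpos[THEN less_imp_neq, THEN not_sym])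
    ultimately have "- ln (Qf (f A)) = (\<Sum>i<t. - ln (qf (\<mu> i) \<sigma> (Y i A)))"
      by (simp add: sum_negf)
    also have "\<dots> \<le> (\<Sum>i<t. L + ((real (Y i A) - \<mu> i)\<^sup>2 + 1/12) / (2 * \<sigma>\<^sup>2))"
    proof (rule sum_mono)
      fix i
      have e: "exp (- L - ((real (Y i A) - \<mu> i)\<^sup>2 + 1/12) / (2 * \<sigma>\<^sup>2)) \<le> qf (\<mu> i) \<sigma> (Y i A)"
        unfolding L_def by (rule qf_lower[OF spos])
      have "- L - ((real (Y i A) - \<mu> i)\<^sup>2 + 1/12) / (2 * \<sigma>\<^sup>2) \<le> ln (qf (\<mu> i) \<sigma> (Y i A))"
        using e qpos by (metis exp_gt_zero ln_exp ln_le_cancel_iff)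
      then show "- ln (qf (\<mu> i) \<sigma> (Y i A)) \<le> L + ((real (Y i A) - \<mu> i)\<^sup>2 + 1/12) / (2 * \<sigma>\<^sup>2)" by simp
    qed
    finally show ?thesis .
  qed
  have step1: "(\<Sum>A\<in>S. - ln (Qf (f A))) / N \<le> (\<Sum>A\<in>S. \<Sum>i<t. L + ((real (Y i A) - \<mu> i)\<^sup>2 + 1/12) / (2 * \<sigma>\<^sup>2)) / N"
    using Npos by (intro divide_right_mono sum_mono hterm) auto
  have step2: "(\<Sum>A\<in>S. \<Sum>i<t. L + ((real (Y i A) - \<mu> i)\<^sup>2 + 1/12) / (2 * \<sigma>\<^sup>2)) / N
      = (\<Sum>i<t. L + (V i + 1/12) / (2 * \<sigma>\<^sup>2))"
  proof -
    have "(\<Sum>A\<in>S. \<Sum>i<t. L + ((real (Y i A) - \<mu> i)\<^sup>2 + 1/12) / (2 * \<sigma>\<^sup>2)) / N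
        = (\<Sum>i<t. (\<Sum>A\<in>S. L + ((real (Y i A) - \<mu> i)\<^sup>2 + 1/12) / (2 * \<sigma>\<^sup>2)) / N)"
      by (subst sum.swap) (simp add: sum_divide_distrib)
    also have "\<dots> = (\<Sum>i<t. L + (V i + 1/12) / (2 * \<sigma>\<^sup>2))"
    proof (rule sum.cong[OF refl])
      fix i
      have "(\<Sum>A\<in>S. L + ((real (Y i A) - \<mu> i)\<^sup>2 + 1/12) / (2 * \<sigma>\<^sup>2))
          = N * L + ((\<Sum>A\<in>S. (real (Y i A) - \<mu> i)\<^sup>2) + N / 12) / (2 * \<sigma>\<^sup>2)"
        unfolding N_def by (simp add: sum.distrib sum_divide_distrib[symmetric] add_divide_distrib)
      then show "(\<Sum>A\<in>S. L + ((real (Y i A) - \<mu> i)\<^sup>2 + 1/12) / (2 * \<sigma>\<^sup>2)) / N = L + (V i + 1/12) / (2 * \<sigma>\<^sup>2)"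
        unfolding V_def using Npos spos by (simp add: field_simps)
    qed
    finally show ?thesis .
  qed
  have Vmu: "V i \<le> \<mu> i" if "i < t" for i
  proof -
    have R: "Rset n M i \<subseteq> {..<n}" unfolding Rset_def by auto
    show ?thesis
      unfolding V_def \<mu>_def N_def Y_def S_def by (rule var_le_mean[OF R k'(1) k'(3) n])
  qed
  have musum: "(\<Sum>i<t. \<mu> i) \<le> real t * r"
  proof -
    have blk: "(\<Sum>i\<in>{b * D..<b * D + D}. \<mu> i) \<le> real k" if b: "b < m" for b
    proof -
      have bt: "b * (d + 1) + (d + 1) \<le> t" using b unfolding tm
        by (metis add.commute mult_Suc less_eq_Suc_le mult_le_mono1 Suc_eq_plus1)
      have "(\<Sum>i\<in>{b * D..<b * D + D}. \<mu> i) = (\<Sum>A\<in>S. real (\<Sum>i\<in>{b * D..<b * D + D}. Y i A)) / N"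
        unfolding \<mu>_def by (simp add: sum_divide_distrib[symmetric] sum.swap[of _ S])
      also have "\<dots> \<le> (\<Sum>A\<in>S. real k') / N"
      proof (intro divide_right_mono sum_mono)
        fix A assume A: "A \<in> S"
        have fA: "finite A" using A unfolding S_def using finite_subset by blast
        have "(\<Sum>i\<in>{b * D..<b * D + D}. Y i A) \<le> card A"
          unfolding Y_def D_def by (rule block_le[OF rl bt fA])
        then show "real (\<Sum>i\<in>{b * D..<b * D + D}. Y i A) \<le> real k'" unfolding of_nat_le_iff using A unfolding S_def by simp
      qed (use Npos in auto)
      also have "\<dots> = real k'" unfolding N_def using Npos unfolding N_def by simp
      also have "\<dots> \<le> real k" using k' by simp
      finally show ?thesis .
    qed
    have "(\<Sum>i<t. \<mu> i) = (\<Sum>b<m. \<Sum>i\<in>{b * D..<b * D + D}. \<mu> i)"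
      unfolding tm D_def by (rule sum.nat_group[symmetric])
    also have "\<dots> \<le> (\<Sum>b<m. real k)" by (rule sum_mono) (use blk in auto)
    also have "\<dots> = real t * r" unfolding r_def tm D_def by (simp add: field_simps)
    finally show ?thesis .
  qed
  have Vsum: "(\<Sum>i<t. V i) \<le> real t * r"
    using sum_mono[of "{..<t}" V \<mu>] Vmu musum by fastforce
  have "ln N \<le> (\<Sum>i<t. L + (V i + 1/12) / (2 * \<sigma>\<^sup>2))" using G step1 step2 by linarith
  also have "\<dots> = real t * L + ((\<Sum>i<t. V i) + real t / 12) / (2 * \<sigma>\<^sup>2)"
    by (simp add: sum.distrib sum_divide_distrib[symmetric] add_divide_distrib)
  also have "\<dots> \<le> real t * L + (real t * r + real t / 12) / (2 * \<sigma>\<^sup>2)"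
    using Vsum spos by (intro add_left_mono divide_right_mono) auto
  also have "\<dots> = real t * L + real t / 2" unfolding s2 using rpos by (simp add: field_simps)
  also have "\<dots> = real t / 2 * ln (2 * pi * exp 1 * (real k / real (d + 1) + 1/12))"
  proof -
    have p: "2 * pi * \<sigma>\<^sup>2 > 0" using spos by simp
    have "2 * L = ln (2 * pi * \<sigma>\<^sup>2)" unfolding L_def using p by (simp add: ln_sqrt)
    moreover have "ln (2 * pi * exp 1 * (real k / real (d + 1) + 1/12)) = ln (2 * pi * \<sigma>\<^sup>2) + 1"
    proof -
      have "real k / (1 + real d) \<ge> 0" by simp
      then have "real k / (1 + real d) + 1/12 \<noteq> 0" by linarith
      then show ?thesis unfolding s2 r_def D_def using p unfolding s2 r_def D_def by (simp add: ln_mult)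
    qed
    ultimately show ?thesis by (simp add: field_simps)
  qed
  finally show ?thesis unfolding N_def cardS .
qed



theorem theorem5:
  fixes \<delta> :: real
  assumes "\<delta> > 0"
  shows "\<exists>c::real>0. \<exists>n0::nat. \<forall>n k d t M.
           n \<ge> n0 \<and> c * log 2 (real n) \<le> real k \<and> k \<le> n \<and>
           t \<ge> 1 \<and> (d + 1) dvd t \<and>
           binary_matrix t n M \<and> runlength_constrained d t n M \<and> QNAGT_scheme k t n M
           \<longrightarrow> real t \<ge> 2 * (1 - \<delta>) * real k * log 2 (1 + real n / real k)
                        / log 2 (2 * pi * exp 1 * real k / real (d + 1) + 2)"
proof (intro exI[of _ "2 / \<delta>"] conjI exI[of _ "2::nat"] allI impI)
  show "2 / \<delta> > 0" using assms by simp
  fix n k d t M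
  assume H: "2 \<le> n \<and> 2 / \<delta> * log 2 (real n) \<le> real k \<and> k \<le> n \<and>
           t \<ge> 1 \<and> (d + 1) dvd t \<and>
           binary_matrix t n M \<and> runlength_constrained d t n M \<and> QNAGT_scheme k t n M"
  then have n: "2 \<le> n" and ck: "2 / \<delta> * log 2 (real n) \<le> real k" and kn: "k \<le> n"
    and dv: "(d + 1) dvd t" and bin: "binary_matrix t n M" and rl: "runlength_constrained d t n M"
    and Qs: "QNAGT_scheme k t n M" by auto
  obtain m where tm: "t = m * (d + 1)" using dv by (metis dvd_def mult.commute)
  have ln2: "ln (2::real) > 0" by simp
  have lnn: "ln (real n) \<ge> ln 2" using n by simp
  have ck': "2 * ln (real n) \<le> \<delta> * real k * ln 2"
  proof -
    have "2 / \<delta> * (ln (real n) / ln 2) \<le> real k" using ck by (simp add: log_def)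
    then show ?thesis using assms ln2 by (simp add: field_simps)
  qed
  have k1: "1 \<le> k"
  proof (rule ccontr)
    assume "\<not> 1 \<le> k"
    then have "k = 0" by simp
    then have "2 * ln (real n) \<le> 0" using ck' by simp
    then show False using lnn ln2 by linarith
  qed
  obtain k' where k': "1 \<le> k'" "k' \<le> k" "k' \<le> n"
    and bl: "real k * ln (1 + real n / real k) \<le> ln (real (n choose k')) + ln (real n + 1)"
    using binom_lower[OF n k1 kn] by blast
  have co: "ln (real (n choose k')) \<le> real t / 2 * ln (2 * pi * exp 1 * (real k / real (d + 1) + 1/12))"
    by (rule core[OF tm bin rl Qs k' n])
  define arg where "arg = 2 * pi * exp 1 * real k / real (d + 1) + 2"
  have r0: "real k / real (d + 1) \<ge> 0" by simp
  have argge: "arg \<ge> 2" unfolding arg_def by simp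
  have arg_le: "2 * pi * exp 1 * (real k / real (d + 1) + 1/12) \<le> arg"
  proof -
    have "pi * exp 1 \<le> 4 * 3" using pi_less_4 exp_le by (intro mult_mono) auto
    then have "2 * pi * exp 1 * (1/12) \<le> 2" by simp
    then show ?thesis unfolding arg_def by (simp add: algebra_simps)
  qed
  have argpos: "2 * pi * exp 1 * (real k / real (d + 1) + 1/12) > 0"
  proof -
    have "real k / real (d + 1) + 1/12 > 0" using r0 by linarith
    then show ?thesis by simp
  qed
  have Lc: "ln (2 * pi * exp 1 * (real k / real (d + 1) + 1/12)) \<le> ln arg"
    using arg_le argpos by simp
  have Lpos: "ln arg > 0" using argge by simp
  have lnk: "ln (1 + real n / real k) \<ge> ln 2"
  proof -
    have "real n / real k \<ge> 1" using kn k1 by simp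
    then show ?thesis by simp
  qed
  have ln1: "ln (real n + 1) \<le> 2 * ln (real n)"
  proof -
    have n2: "real n \<ge> 2" using n by simp
    have "real n * 2 \<le> real n * real n" by (rule mult_left_mono) (use n2 in auto)
    then have "real n + 1 \<le> real n * real n" using n2 by linarith
    then have "ln (real n + 1) \<le> ln (real n * real n)" using n by simp
    then show ?thesis using n by (simp add: ln_mult)
  qed
  have "\<delta> * real k * ln 2 \<le> \<delta> * real k * ln (1 + real n / real k)"
    using assms lnk by (intro mult_left_mono) auto
  then have slack: "ln (real n + 1) \<le> \<delta> * (real k * ln (1 + real n / real k))"
    using ln1 ck' by (simp add: mult.assoc)
  have main: "(1 - \<delta>) * (real k * ln (1 + real n / real k)) \<le> real t / 2 * ln arg"
  proof -
    have "real t / 2 * ln (2 * pi * exp 1 * (real k / real (d + 1) + 1/12)) \<le> real t / 2 * ln arg"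
      using Lc by (intro mult_left_mono) auto
    then show ?thesis using bl co slack by (simp add: algebra_simps)
  qed
  have "2 * (1 - \<delta>) * real k * log 2 (1 + real n / real k) / log 2 arg
        = 2 * (1 - \<delta>) * real k * ln (1 + real n / real k) / ln arg"
    using ln2 by (simp add: log_def)
  also have "\<dots> \<le> real t"
    using main Lpos by (simp add: divide_le_eq algebra_simps)
  finally show "2 * (1 - \<delta>) * real k * log 2 (1 + real n / real k) / log 2 (2 * pi * exp 1 * real k / real (d + 1) + 2) \<le> real t"
    unfolding arg_def .
qed


end
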